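(* Let $n$ be a positive integer and let $\Omega_1,\Omega_2$ be two distinct copies of $2^{[n]}$. For $i=1,2$ let $\bm{p}_i=(p_i^{(1)},\dots,p_i^{(n)})$ be a probability vector (i.e. $0<p_i^{(\ell)}<1$ for all $\ell$), write $p_i:=p_i^{(1)}$, and let $\mu_i$ be the product measure on $\Omega_i$ given by $$\mu_i(U)=\sum_{x\in U}\prod_{\ell\in x}p_i^{(\ell)}\prod_{k\in[n]\setminus x}(1-p_i^{(k)})\qquad (U\subset\Omega_i).$$ Assume that $p_1p_2=\max\{p_1^{(\ell)}p_2^{(\ell)}:\ell\in[n]\}$ and that $p_1^{(\ell)},p_2^{(\ell)}\leqslant 1/3$ for all $\ell\in[n]$. If $U_1\subset\Omega_1$ and $U_2\subset\Omega_2$ are cross-intersecting (i.e. $x\cap y\neq\emptyset$ for all $x\in U_1$, $y\in U_2$), then $\mu_1(U_1)\mu_2(U_2)\leqslant p_1p_2$. Moreover, with $w:=\{\ell\in[n]:p_1^{(\ell)}p_2^{(\ell)}=p_1p_2\}$ and $U_i^{(\ell)}:=\{x\in\Omega_i:\ell\in x\}$, equality holds if and only if $U_1=U_1^{(\ell)}$ and $U_2=U_2^{(\ell)}$ for some $\ell\in w$.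
   Context: A probability vector is a vector $\bm{p}=(p^{(1)},\dots,p^{(n)})$ with $0<p^{(\ell)}<1$ for every $\ell$. *)

theory Defs
  imports Complex_Main
begin

definition prob_vec :: "nat \<Rightarrow> (nat \<Rightarrow> real) \<Rightarrow> bool" where
  "prob_vec n p \<longleftrightarrow> (\<forall>l\<in>{1..n}. 0 < p l \<and> p l < 1)"

definition prod_measure :: "nat \<Rightarrow> (nat \<Rightarrow> real) \<Rightarrow> nat set set \<Rightarrow> real" where
  "prod_measure n p U = (\<Sum>x\<in>U. (\<Prod>l\<in>x. p l) * (\<Prod>k\<in>{1..n} - x. (1 - p k)))"

definition cross_intersecting :: "'a set set \<Rightarrow> 'a set set \<Rightarrow> bool" where
  "cross_intersecting U V \<longleftrightarrow> (\<forall>x\<in>U. \<forall>y\<in>V. x \<inter> y \<noteq> {})"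

definition star :: "nat \<Rightarrow> nat \<Rightarrow> nat set set" where
  "star n l = {x. x \<subseteq> {1..n} \<and> l \<in> x}"

end

theory Submission
  imports Defs
begin

lemma core:
  fixes q1 q2 u v :: real
  assumes q1: "0 < q1" "q1 \<le> 1/3" and q2: "0 < q2" "q2 \<le> 1/3"
    and u: "0 \<le> u" "u \<le> q1+q2-q1*q2" and v: "0 \<le> v" "v \<le> q1+q2-q1*q2"
  shows "(9/4)*(q1*(1-q2)*u + q2*(1-q1)*v) + (81/16)*q1*q2*u*v + (u+v)/40 \<le> u + v - u*v"
proof -
  define \<alpha> where "\<alpha> = 1 - (9/4)*q1*(1-q2)"
  define \<beta> where "\<beta> = 1 - (9/4)*q2*(1-q1)"
  define \<gamma> where "\<gamma> = 1 + (81/16)*q1*q2"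
  define c where "c = q1+q2-q1*q2"
  have h1: "q1*(1-q2) \<le> 1/3" using q1 q2 by (simp add: mult_le_one) (smt (verit) mult_le_cancel_left1)
  have h2: "q2*(1-q1) \<le> 1/3" using q1 q2 by (smt (verit) mult_le_cancel_left1)
  have a4: "\<alpha> \<ge> 1/4" using h1 by (simp add: \<alpha>_def)
  have b4: "\<beta> \<ge> 1/4" using h2 by (simp add: \<beta>_def)
  have m: "(1-2*q1)*(1-2*q2) \<ge> (1/3)*(1/3)" using q1 q2 by (intro mult_mono) auto
  have m2: "q1 + q2 - 2*(q1*q2) \<le> 4/9" using m by (simp add: algebra_simps)
  have ab0: "\<alpha>+\<beta> = 2 - (9/4)*(q1+q2-2*(q1*q2))" by (simp add: \<alpha>_def \<beta>_def field_simps)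
  have m3: "(9/4)*(q1+q2-2*(q1*q2)) \<le> 1" using m2 by simp
  have ab: "\<alpha> + \<beta> \<ge> 1" using m3 ab0 by linarith
  have qq: "q1*q2 \<le> (1/3)*(1/3)" using q1 q2 by (intro mult_mono) auto
  have g: "\<gamma> \<le> 25/16" using qq by (simp add: \<gamma>_def)
  have mm: "(1-q1)*(1-q2) \<ge> (2/3)*(2/3)" using q1 q2 by (intro mult_mono) auto
  have c5: "c \<le> 5/9" using mm by (simp add: c_def algebra_simps)
  have "q1*q2 \<le> q1" using q1 q2 by (simp add: mult_left_le)
  then have c0: "c \<ge> 0" using q2 by (simp add: c_def)
  have gc: "\<gamma>*c \<le> 125/144"
  proof -
    have "\<gamma>*c \<le> (25/16)*(5/9)" using g c5 c0 by (intro mult_mono) (auto simp: \<gamma>_def)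
    then show ?thesis by simp
  qed
  define \<theta> where "\<theta> = \<alpha>/(\<alpha>+\<beta>)"
  have apb: "\<alpha>+\<beta> > 0" using ab by simp
  have th0: "0 \<le> \<theta>" "\<theta> \<le> 1" using a4 b4 apb by (auto simp: \<theta>_def divide_simps)
  have uv1: "u*v \<le> c*u" using u v by (simp add: c_def mult.commute mult_left_mono)
  have uv2: "u*v \<le> c*v" using u v by (simp add: c_def mult_right_mono)
  have "u*v = \<theta>*(u*v) + (1-\<theta>)*(u*v)" by (simp add: algebra_simps)
  also have "\<dots> \<le> \<theta>*(c*u) + (1-\<theta>)*(c*v)"
    using uv1 uv2 th0 by (intro add_mono mult_left_mono) auto
  finally have uvb: "u*v \<le> c*(\<theta>*u + (1-\<theta>)*v)" by (simp add: algebra_simps)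
  have gpos: "\<gamma> \<ge> 0" using q1 q2 by (simp add: \<gamma>_def)
  have "\<gamma>*(u*v) \<le> \<gamma>*(c*(\<theta>*u + (1-\<theta>)*v))" using uvb gpos by (rule mult_left_mono)
  also have "\<dots> = (\<gamma>*c/(\<alpha>+\<beta>))*(\<alpha>*u + \<beta>*v)"
  proof -
    have "\<theta>*u + (1-\<theta>)*v = (\<alpha>*u+\<beta>*v)/(\<alpha>+\<beta>)"
    proof -
      have nz: "\<alpha>+\<beta> \<noteq> 0" using apb by simp
      have "1 - \<theta> = \<beta>/(\<alpha>+\<beta>)" using nz by (simp add: \<theta>_def field_simps)
      then show ?thesis using nz by (simp add: \<theta>_def add_divide_distrib times_divide_eq_right mult.commute)
    qed
    then show ?thesis by simp
  qed
  also have "\<dots> \<le> (125/144)*(\<alpha>*u + \<beta>*v)"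
  proof (rule mult_right_mono)
    show "\<gamma>*c/(\<alpha>+\<beta>) \<le> 125/144" using gc ab apb
      by (simp add: divide_simps)
    show "0 \<le> \<alpha>*u + \<beta>*v" using a4 b4 u v by simp
  qed
  finally have key: "\<gamma>*(u*v) \<le> (125/144)*(\<alpha>*u + \<beta>*v)" .
  have "(u+v)/40 \<le> (19/144)*(\<alpha>*u + \<beta>*v)"
  proof -
    have "\<alpha>*u \<ge> u/4" using mult_right_mono[OF a4 u(1)] by simp
    moreover have "\<beta>*v \<ge> v/4" using mult_right_mono[OF b4 v(1)] by simp
    moreover have "(19/144)*(\<alpha>*u+\<beta>*v) = (19/144)*(\<alpha>*u) + (19/144)*(\<beta>*v)" by (simp add: algebra_simps)
    ultimately show ?thesis using u v by (simp add: field_simps)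
  qed
  moreover have "(125/144)*(\<alpha>*u+\<beta>*v) = (125/144)*(\<alpha>*u) + (125/144)*(\<beta>*v)" by (simp add: algebra_simps)
  ultimately have "\<gamma>*(u*v) + (u+v)/40 \<le> \<alpha>*u + \<beta>*v" using key by (simp add: field_simps)
  then show ?thesis by (simp add: \<alpha>_def \<beta>_def \<gamma>_def field_simps)
qed

lemma regC:
  fixes q1 q2 P S a0 a1 b0 b1 :: real
  assumes q1: "0 < q1" "q1 \<le> 1/3" and q2: "0 < q2" "q2 \<le> 1/3"
    and qP: "q1*q2 \<le> P" and S0: "0 \<le> S" and SP: "S \<le> 9*P/4"
    and a: "0 \<le> a0" "a0 \<le> a1" "a1 \<le> 1" and b: "0 \<le> b0" "b0 \<le> b1" "b1 \<le> 1"
    and H01: "a0*b1 \<le> S*(1-a0)*(1-b1)" and H10: "a1*b0 \<le> S*(1-a1)*(1-b0)"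
    and T: "(1-q1)*(1-q2)*P \<le> q1*q2*(a1*b1)"
  shows "((1-q1)*a0+q1*a1)*((1-q2)*b0+q2*b1) \<le> P - (P-q1*q2)*(a1*b1) - P*((1-a1)+(1-b1))/40"
proof -
  define x where "x = a1"
  define y where "y = b1"
  define u where "u = 1-x"
  define v where "v = 1-y"
  define c where "c = q1+q2-q1*q2"
  have qq0: "q1*q2 > 0" using q1 q2 by simp
  have P0: "P > 0" using qP qq0 by linarith
  have omq: "(1-q1)*(1-q2) > 0" using q1 q2 by simp
  have xy0: "x*y > 0"
  proof -
    have "(1-q1)*(1-q2)*P > 0" using omq P0 by simp
    then have "q1*q2*(x*y) > 0" using T by (simp add: x_def y_def)
    then show ?thesis using qq0 by (simp add: zero_less_mult_iff)
  qed
  have x0: "x > 0" and y0: "y > 0" using xy0 a b by (auto simp: x_def y_def zero_less_mult_iff)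
  have x1: "x \<le> 1" and y1: "y \<le> 1" using a b by (auto simp: x_def y_def)
  have xyge: "x*y \<ge> (1-q1)*(1-q2)"
  proof -
    have "(1-q1)*(1-q2)*(q1*q2) \<le> (1-q1)*(1-q2)*P" using qP omq by (intro mult_left_mono) auto
    also have "\<dots> \<le> q1*q2*(x*y)" using T by (simp add: x_def y_def)
    finally have "q1*q2*((1-q1)*(1-q2)) \<le> q1*q2*(x*y)" by (simp add: algebra_simps)
    then show ?thesis using mult_le_cancel_left_pos[OF qq0] by blast
  qed
  have xge: "x \<ge> x*y" using x0 y1 by (simp add: mult_left_le)
  have yge: "y \<ge> x*y" using y0 x1 by (simp add: mult_right_le_one_le)
  have uc: "u \<le> c" and vc: "v \<le> c" using xyge xge yge by (simp_all add: u_def v_def c_def algebra_simps)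
  have u0: "0 \<le> u" and v0: "0 \<le> v" using x1 y1 by (simp_all add: u_def v_def)
  have A0: "a0*y \<le> S*(1-y)"
  proof -
    have "(1-a0)*(S*(1-b1)) \<le> S*(1-b1)" using S0 a b by (intro mult_left_le_one_le) auto
    then have "S*(1-a0)*(1-b1) \<le> S*(1-b1)" by (simp add: algebra_simps)
    then show ?thesis using H01 by (simp add: y_def)
  qed
  have B0: "b0*x \<le> S*(1-x)"
  proof -
    have "(1-b0)*(S*(1-a1)) \<le> S*(1-a1)" using S0 a b by (intro mult_left_le_one_le) auto
    then have "S*(1-a1)*(1-b0) \<le> S*(1-a1)" by (simp add: algebra_simps)
    then show ?thesis using H10 by (simp add: x_def mult.commute)
  qed
  define ab where "ab = ((1-q1)*a0+q1*a1)*((1-q2)*b0+q2*b1)"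
  have e1: "ab*(x*y) = ((1-q1)*(a0*y) + q1*(x*y))*((1-q2)*(b0*x) + q2*(x*y))"
    by (simp add: ab_def x_def y_def algebra_simps)
  have f1: "(1-q1)*(a0*y) + q1*(x*y) \<le> (1-q1)*(S*(1-y)) + q1*(x*y)"
    using A0 q1 by (simp add: mult_left_mono)
  have f2: "(1-q2)*(b0*x) + q2*(x*y) \<le> (1-q2)*(S*(1-x)) + q2*(x*y)"
    using B0 q2 by (simp add: mult_left_mono)
  have nn2: "0 \<le> (1-q2)*(b0*x) + q2*(x*y)" using q2 b x0 xy0 by simp
  have nn1: "0 \<le> (1-q1)*(S*(1-y)) + q1*(x*y)" using q1 S0 y1 xy0 by simp
  have "ab*(x*y) \<le> ((1-q1)*(S*v) + q1*(x*y))*((1-q2)*(S*u) + q2*(x*y))"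
    unfolding e1 u_def v_def by (rule mult_mono[OF f1 f2 nn1 nn2])
  also have "\<dots> = (x*y)*(q1*q2*(x*y) + S*(q1*(1-q2)*u + q2*(1-q1)*v)) + (1-q1)*(1-q2)*(S*S)*(u*v)"
    by (simp add: algebra_simps)
  also have "\<dots> \<le> (x*y)*(q1*q2*(x*y) + S*(q1*(1-q2)*u + q2*(1-q1)*v)) + (x*y)*((81/16)*P*(q1*q2)*(u*v))"
  proof -
    have SS: "S*S \<le> (9*P/4)*(9*P/4)" using S0 SP by (intro mult_mono) auto
    have uv0: "u*v \<ge> 0" using u0 v0 by simp
    have "(1-q1)*(1-q2)*(S*S)*(u*v) \<le> (1-q1)*(1-q2)*((9*P/4)*(9*P/4))*(u*v)"
      using SS omq uv0 by (intro mult_right_mono mult_left_mono) auto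
    also have "\<dots> = (81/16)*P*(u*v)*((1-q1)*(1-q2)*P)" by (simp add: algebra_simps)
    also have "\<dots> \<le> (81/16)*P*(u*v)*(q1*q2*(x*y))"
      using T P0 uv0 by (intro mult_left_mono) (auto simp: x_def y_def)
    also have "\<dots> = (x*y)*((81/16)*P*(q1*q2)*(u*v))" by (simp add: algebra_simps)
    finally show ?thesis by simp
  qed
  also have "\<dots> = (x*y)*(q1*q2*(x*y) + S*(q1*(1-q2)*u + q2*(1-q1)*v) + (81/16)*P*(q1*q2)*(u*v))"
    by (simp add: algebra_simps)
  finally have main: "ab*(x*y) \<le> (x*y)*(q1*q2*(x*y) + S*(q1*(1-q2)*u + q2*(1-q1)*v) + (81/16)*P*(q1*q2)*(u*v))" .
  have cr: "(9/4)*(q1*(1-q2)*u + q2*(1-q1)*v) + (81/16)*q1*q2*u*v + (u+v)/40 \<le> u + v - u*v"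
    using core[OF q1 q2 u0 _ v0] uc vc by (simp add: c_def)
  have lin0: "0 \<le> q1*(1-q2)*u + q2*(1-q1)*v" using q1 q2 u0 v0 by simp
  define L where "L = q1*(1-q2)*u + q2*(1-q1)*v"
  define M where "M = q1*q2*(u*v)"
  define W where "W = u+v-u*v"
  have I: "q1*q2*(x*y) + S*(q1*(1-q2)*u + q2*(1-q1)*v) + (81/16)*P*(q1*q2)*(u*v)
      \<le> P - (P-q1*q2)*(x*y) - P*(u+v)/40"
  proof -
    have f1: "S*L \<le> (9*P/4)*L"
      using SP lin0 unfolding L_def by (rule mult_right_mono)
    have f2: "P*((9/4)*L + (81/16)*M + (u+v)/40) \<le> P*W"
      using cr P0 unfolding L_def M_def W_def by (simp add: mult_left_mono mult.assoc)
    have e2: "P*((9/4)*L + (81/16)*M + (u+v)/40) = (9*P/4)*L + (81/16)*P*M + P*(u+v)/40"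
      by (simp add: algebra_simps)
    have e3: "P - (P-q1*q2)*(x*y) - P*(u+v)/40 - (q1*q2*(x*y) + S*(q1*(1-q2)*u + q2*(1-q1)*v) + (81/16)*P*(q1*q2)*(u*v))
       = P*W - S*L - (81/16)*P*M - P*(u+v)/40"
      by (simp add: L_def M_def W_def u_def v_def field_simps)
    show ?thesis using f1 f2 e2 e3 by linarith
  qed
  have "ab*(x*y) \<le> (x*y)*(P - (P-q1*q2)*(x*y) - P*(u+v)/40)"
    using main I xy0 by (smt (verit) mult_left_mono)
  then have "ab \<le> P - (P-q1*q2)*(x*y) - P*(u+v)/40" using xy0 by (metis mult.commute mult_le_cancel_left_pos)
  then show ?thesis by (simp add: ab_def x_def y_def u_def v_def)
qed

lemma H_iff:
  fixes S t b :: real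
  shows "t*b \<le> S*(1-t)*(1-b) \<longleftrightarrow> b*(t + S*(1-t)) \<le> S*(1-t)"
proof -
  have "S*(1-t)*(1-b) = S*(1-t) - b*(S*(1-t))" by (simp add: algebra_simps)
  moreover have "b*(t + S*(1-t)) = t*b + b*(S*(1-t))" by (simp add: algebra_simps)
  ultimately show ?thesis by (smt (verit))
qed

lemma hstep:
  fixes q1 q2 S a0 a1 b0 b1 :: real
  assumes q1: "0 < q1" "q1 \<le> 1/3" and q2: "0 < q2" "q2 \<le> 1/3"
    and S: "0 < S" "S < 1" and qS: "q1*q2 \<le> S*(1-q1)*(1-q2)"
    and a: "0 \<le> a0" "a0 \<le> 1" "0 \<le> a1" "a1 \<le> 1" and b: "0 \<le> b0" "b0 \<le> 1" "0 \<le> b1" "b1 \<le> 1"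
    and H00: "a0*b0 \<le> S*(1-a0)*(1-b0)" and H01: "a0*b1 \<le> S*(1-a0)*(1-b1)"
    and H10: "a1*b0 \<le> S*(1-a1)*(1-b0)"
  shows "((1-q1)*a0+q1*a1)*((1-q2)*b0+q2*b1) \<le> S*(1-((1-q1)*a0+q1*a1))*(1-((1-q2)*b0+q2*b1))"
proof -
  define a where "a = (1-q1)*a0+q1*a1"
  define b where "b = (1-q2)*b0+q2*b1"
  have b01: "0 \<le> b" "b \<le> 1" using b q2 by (auto simp: b_def intro!: convex_bound_le)
  show ?thesis
  proof (cases "a0 \<le> a1")
    case True
    define u where "u = a0 + S*(1-a0)"
    define v where "v = a1 + S*(1-a1)"
    define Da where "Da = a + S*(1-a)"
    have Da_eq: "Da = (1-q1)*u + q1*v" by (simp add: Da_def a_def u_def v_def algebra_simps)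
    have "u = S + (1-S)*a0" by (simp add: u_def algebra_simps)
    moreover have "(1-S)*a0 \<ge> 0" using S a by simp
    ultimately have uS: "u \<ge> S" by simp
    have "v = 1 - (1-S)*(1-a1)" by (simp add: v_def algebra_simps)
    moreover have "(1-S)*(1-a1) \<ge> 0" using S a by simp
    ultimately have v1: "v \<le> 1" by simp
    have "v - u = (1-S)*(a1-a0)" by (simp add: u_def v_def algebra_simps)
    moreover have "(1-S)*(a1-a0) \<ge> 0" using S True by simp
    ultimately have uv: "u \<le> v" by simp
    have u0: "u > 0" using uS S by linarith
    have v0: "v > 0" using uv u0 by linarith
    have Da0: "Da \<ge> 0" using Da_eq u0 v0 q1 by simp
    have hb0: "b0*v \<le> S*(1-a1)" using H10 H_iff[of a1 b0 S] by (simp add: v_def mult.commute)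
    have hb1: "b1*u \<le> S*(1-a0)" using H01 H_iff[of a0 b1 S] by (simp add: u_def)
    have id: "(1-S)*(S*(1-a)*(u*v) - ((1-q2)*(S*(1-a1))*(Da*u) + q2*(S*(1-a0))*(Da*v)))
        = S*(v-u)*((1-q1)*(1-q2)*u - q1*q2*v)"
      by (simp add: a_def u_def v_def Da_def algebra_simps)
    have nn: "S*(v-u)*((1-q1)*(1-q2)*u - q1*q2*v) \<ge> 0"
    proof -
      have "(1-q1)*(1-q2)*u \<ge> (1-q1)*(1-q2)*S" using uS q1 q2 by (intro mult_left_mono) auto
      moreover have "q1*q2*v \<le> q1*q2" using v1 q1 q2 by (simp add: mult_left_le)
      ultimately have "(1-q1)*(1-q2)*u - q1*q2*v \<ge> 0" using qS by (simp add: algebra_simps)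
      then show ?thesis using S uv by simp
    qed
    have k1: "(1-q2)*(S*(1-a1))*(Da*u) + q2*(S*(1-a0))*(Da*v) \<le> S*(1-a)*(u*v)"
    proof -
      have "(1-S)*(S*(1-a)*(u*v) - ((1-q2)*(S*(1-a1))*(Da*u) + q2*(S*(1-a0))*(Da*v))) \<ge> 0"
        using id nn by simp
      then show ?thesis using S by (simp add: zero_le_mult_iff)
    qed
    have k2: "b*Da*(u*v) \<le> (1-q2)*(S*(1-a1))*(Da*u) + q2*(S*(1-a0))*(Da*v)"
    proof -
      have e: "b*Da*(u*v) = (1-q2)*(b0*v)*(Da*u) + q2*(b1*u)*(Da*v)"
        by (simp add: b_def algebra_simps)
      have "(1-q2)*(b0*v)*(Da*u) \<le> (1-q2)*(S*(1-a1))*(Da*u)"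
        using hb0 q2 Da0 u0 by (intro mult_right_mono mult_left_mono) auto
      moreover have "q2*(b1*u)*(Da*v) \<le> q2*(S*(1-a0))*(Da*v)"
        using hb1 q2 Da0 v0 by (intro mult_right_mono mult_left_mono) auto
      ultimately show ?thesis using e by (smt (verit))
    qed
    have "b*Da*(u*v) \<le> S*(1-a)*(u*v)" using k1 k2 by (smt (verit))
    then have "b*Da \<le> S*(1-a)" using u0 v0 by simp
    then have "a*b \<le> S*(1-a)*(1-b)" using H_iff[of a b S] by (simp add: Da_def)
    then show ?thesis by (simp add: a_def b_def)
  next
    case False
    have "b0*(a0 + S*(1-a0)) \<le> S*(1-a0)" using H00 H_iff[of a0 b0 S] by simp
    moreover have "b1*(a0 + S*(1-a0)) \<le> S*(1-a0)" using H01 H_iff[of a0 b1 S] by simp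
    ultimately have "b*(a0 + S*(1-a0)) \<le> S*(1-a0)"
    proof -
      assume h0: "b0*(a0 + S*(1-a0)) \<le> S*(1-a0)" and h1: "b1*(a0 + S*(1-a0)) \<le> S*(1-a0)"
      have "b*(a0 + S*(1-a0)) = (1-q2)*(b0*(a0 + S*(1-a0))) + q2*(b1*(a0 + S*(1-a0)))"
        by (simp add: b_def algebra_simps)
      also have "\<dots> \<le> (1-q2)*(S*(1-a0)) + q2*(S*(1-a0))"
        using h0 h1 q2 by (intro add_mono mult_left_mono) auto
      finally show ?thesis by (simp add: algebra_simps)
    qed
    then have Ha0: "a0*b \<le> S*(1-a0)*(1-b)" using H_iff[of a0 b S] by simp
    have "a = a0 - q1*(a0-a1)" by (simp add: a_def algebra_simps)
    moreover have "q1*(a0-a1) \<ge> 0" using False q1 by simp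
    ultimately have aa1: "a \<le> a0" by simp
    have "0 \<le> a" using q1 a by (simp add: a_def)
    note aa = aa1 this
    have "a*b \<le> a0*b" using aa b01 by (simp add: mult_right_mono)
    also have "\<dots> \<le> S*(1-a0)*(1-b)" by (rule Ha0)
    also have "\<dots> \<le> S*(1-a)*(1-b)" using aa S b01 by (intro mult_right_mono mult_left_mono) auto
    finally show ?thesis by (simp add: a_def b_def)
  qed
qed

lemma eqpat:
  fixes a b A B P :: real
  assumes "0 \<le> a" "a \<le> A" "0 \<le> b" "b \<le> B" "A*B \<le> P" "a*b = P" "P > 0"
  shows "a = A \<and> b = B"
proof -
  have e: "A*B - a*b = A*(B-b) + b*(A-a)" by (simp add: algebra_simps)
  have b0: "b > 0" using assms by (metis less_eq_real_def mult_zero_right)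
  have A0: "A > 0" using assms by (metis less_eq_real_def mult_zero_left order_less_le_trans)
  have t1: "A*(B-b) \<ge> 0" using A0 assms by simp
  have t2: "b*(A-a) \<ge> 0" using b0 assms by simp
  have "A*(B-b) + b*(A-a) \<le> 0" using e assms by (smt (verit))
  then have "A*(B-b) = 0" "b*(A-a) = 0" using t1 t2 by (smt (verit))+
  then show ?thesis using A0 b0 by simp
qed

lemma step:
  fixes q1 q2 P S a0 a1 b0 b1 :: real
  assumes q1: "0 < q1" "q1 \<le> 1/3" and q2: "0 < q2" "q2 \<le> 1/3"
    and qP: "q1*q2 \<le> P" and S: "0 < S" "S < 1" and SP: "S \<le> 9*P/4"
    and qS: "q1*q2 \<le> S*(1-q1)*(1-q2)"
    and a: "0 \<le> a0" "a0 \<le> 1" "0 \<le> a1" "a1 \<le> 1" and b: "0 \<le> b0" "b0 \<le> 1" "0 \<le> b1" "b1 \<le> 1"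
    and P00: "a0*b0 \<le> P" and P01: "a0*b1 \<le> P" and P10: "a1*b0 \<le> P"
    and H00: "a0*b0 \<le> S*(1-a0)*(1-b0)" and H01: "a0*b1 \<le> S*(1-a0)*(1-b1)"
    and H10: "a1*b0 \<le> S*(1-a1)*(1-b0)"
  shows "((1-q1)*a0+q1*a1)*((1-q2)*b0+q2*b1) \<le> S*(1-((1-q1)*a0+q1*a1))*(1-((1-q2)*b0+q2*b1))"
    and "((1-q1)*a0+q1*a1)*((1-q2)*b0+q2*b1) \<le> P"
    and "((1-q1)*a0+q1*a1)*((1-q2)*b0+q2*b1) = P \<Longrightarrow>
          (a0 = a1 \<and> b0 = b1) \<or> (a0 = 0 \<and> b0 = 0 \<and> a1 = 1 \<and> b1 = 1 \<and> q1*q2 = P)"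
proof -
  show "((1-q1)*a0+q1*a1)*((1-q2)*b0+q2*b1) \<le> S*(1-((1-q1)*a0+q1*a1))*(1-((1-q2)*b0+q2*b1))"
    by (rule hstep[OF q1 q2 S qS a b H00 H01 H10])
  define a where "a = (1-q1)*a0+q1*a1"
  define b where "b = (1-q2)*b0+q2*b1"
  have P0: "P > 0" using qP q1 q2 by (smt (verit) mult_pos_pos)
  have a_0: "0 \<le> a" using a q1 by (simp add: a_def)
  have b_0: "0 \<le> b" using b q2 by (simp add: b_def)
  have ea: "a = a0 + q1*(a1-a0)" "a = a1 - (1-q1)*(a1-a0)" by (simp_all add: a_def algebra_simps)
  have eb: "b = b0 + q2*(b1-b0)" "b = b1 - (1-q2)*(b1-b0)" by (simp_all add: b_def algebra_simps)
  have "a*b \<le> P \<and> (a*b = P \<longrightarrow> (a0 = a1 \<and> b0 = b1) \<or> (a0 = 0 \<and> b0 = 0 \<and> a1 = 1 \<and> b1 = 1 \<and> q1*q2 = P))"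
  proof (cases "a0 \<le> a1")
    case Ta: True
    have "(1-q1)*(a1-a0) \<ge> 0" using Ta q1 by simp
    then have aA: "a \<le> a1" using ea(2) by linarith
    show ?thesis
    proof (cases "b0 \<le> b1")
      case Tb: True
      have "(1-q2)*(b1-b0) \<ge> 0" using Tb q2 by simp
      then have bB: "b \<le> b1" using eb(2) by linarith
      show ?thesis
      proof (cases "a1*b1 \<le> P")
        case True
        have "a*b \<le> a1*b1" using aA bB a_0 b_0 by (intro mult_mono) auto
        then have le: "a*b \<le> P" using True by simp
        show ?thesis
        proof (intro conjI impI le)
          assume "a*b = P"
          then have "a = a1 \<and> b = b1" using eqpat[OF a_0 aA b_0 bB True] P0 by simp
          then have "a0 = a1 \<and> b0 = b1" using ea eb q1 q2 by auto
          then show "(a0 = a1 \<and> b0 = b1) \<or> (a0 = 0 \<and> b0 = 0 \<and> a1 = 1 \<and> b1 = 1 \<and> q1*q2 = P)" by simp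
        qed
      next
        case F1: False
        show ?thesis
        proof (cases "(1-q1)*(1-q2)*P \<le> q1*q2*(a1*b1)")
          case True
          have r: "a*b \<le> P - (P-q1*q2)*(a1*b1) - P*((1-a1)+(1-b1))/40"
            using regC[OF q1 q2 qP _ SP a(1) Ta a(4) b(1) Tb b(4) H01 H10 True] S
            by (simp add: a_def b_def)
          have t1: "(P-q1*q2)*(a1*b1) \<ge> 0" using qP a b by simp
          have t2: "P*((1-a1)+(1-b1))/40 \<ge> 0" using P0 a b by simp
          show ?thesis
          proof (intro conjI impI)
            show "a*b \<le> P" using r t1 t2 by linarith
            assume "a*b = P"
            then have z1: "(P-q1*q2)*(a1*b1) = 0" and z2: "P*((1-a1)+(1-b1))/40 = 0"
              using r t1 t2 by linarith+
            from z2 P0 a b have a11: "a1 = 1" and b11: "b1 = 1" by auto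
            from z1 a11 b11 have qe: "q1*q2 = P" by simp
            from H01 b11 a have "a0 = 0" by (simp add: mult_le_0_iff)
            moreover from H10 a11 b have "b0 = 0" by (simp add: mult_le_0_iff)
            ultimately show "(a0 = a1 \<and> b0 = b1) \<or> (a0 = 0 \<and> b0 = 0 \<and> a1 = 1 \<and> b1 = 1 \<and> q1*q2 = P)"
              using a11 b11 qe by simp
          qed
        next
          case F2: False
          define T where "T = a1*b1"
          have T0: "T > 0" using F1 P0 by (simp add: T_def)
          have e: "a*b*T = ((1-q1)*(a0*b1) + q1*T)*((1-q2)*(a1*b0) + q2*T)"
            by (simp add: a_def b_def T_def algebra_simps)
          have m1: "(1-q1)*(a0*b1) + q1*T \<le> (1-q1)*P + q1*T" using P01 q1 by simp
          have m2: "(1-q2)*(a1*b0) + q2*T \<le> (1-q2)*P + q2*T" using P10 q2 by simp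
          have n1: "0 \<le> (1-q1)*P + q1*T" using q1 P0 T0 by simp
          have n2: "0 \<le> (1-q2)*(a1*b0) + q2*T" using q2 a b T0 by simp
          have "a*b*T \<le> ((1-q1)*P + q1*T)*((1-q2)*P + q2*T)"
            unfolding e by (rule mult_mono[OF m1 m2 n1 n2])
          also have "\<dots> = P*T + ((1-q1)*(1-q2)*P - q1*q2*T)*(P - T)" by (simp add: algebra_simps)
          also have "\<dots> < P*T"
          proof -
            have "(1-q1)*(1-q2)*P - q1*q2*T > 0" using F2 by (simp add: T_def)
            moreover have "P - T < 0" using F1 by (simp add: T_def)
            ultimately show ?thesis by (simp add: mult_pos_neg)
          qed
          finally have "a*b*T < P*T" .
          then have "a*b < P" using T0 by simp
          then show ?thesis by simp
        qed
      qed
    next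
      case Fb: False
      have "q2*(b1-b0) \<le> 0" using Fb q2 by (simp add: mult_le_0_iff)
      then have bB: "b \<le> b0" using eb(1) by linarith
      have "a*b \<le> a1*b0" using aA bB a_0 b_0 by (intro mult_mono) auto
      then have le: "a*b \<le> P" using P10 by simp
      show ?thesis
      proof (intro conjI impI le)
        assume "a*b = P"
        then have "a = a1 \<and> b = b0" using eqpat[OF a_0 aA b_0 bB P10] P0 by simp
        then have "a0 = a1 \<and> b0 = b1" using ea eb q1 q2 by auto
        then show "(a0 = a1 \<and> b0 = b1) \<or> (a0 = 0 \<and> b0 = 0 \<and> a1 = 1 \<and> b1 = 1 \<and> q1*q2 = P)" by simp
      qed
    qed
  next
    case Fa: False
    have "q1*(a1-a0) \<le> 0" using Fa q1 by (simp add: mult_le_0_iff)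
    then have aA: "a \<le> a0" using ea(1) by linarith
    show ?thesis
    proof (cases "b0 \<le> b1")
      case Tb: True
      have "(1-q2)*(b1-b0) \<ge> 0" using Tb q2 by simp
      then have bB: "b \<le> b1" using eb(2) by linarith
      have "a*b \<le> a0*b1" using aA bB a_0 b_0 by (intro mult_mono) auto
      then have le: "a*b \<le> P" using P01 by simp
      show ?thesis
      proof (intro conjI impI le)
        assume "a*b = P"
        then have "a = a0 \<and> b = b1" using eqpat[OF a_0 aA b_0 bB P01] P0 by simp
        then have "a0 = a1 \<and> b0 = b1" using ea eb q1 q2 by auto
        then show "(a0 = a1 \<and> b0 = b1) \<or> (a0 = 0 \<and> b0 = 0 \<and> a1 = 1 \<and> b1 = 1 \<and> q1*q2 = P)" by simp
      qed
    next
      case Fb: False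
      have "q2*(b1-b0) \<le> 0" using Fb q2 by (simp add: mult_le_0_iff)
      then have bB: "b \<le> b0" using eb(1) by linarith
      have "a*b \<le> a0*b0" using aA bB a_0 b_0 by (intro mult_mono) auto
      then have le: "a*b \<le> P" using P00 by simp
      show ?thesis
      proof (intro conjI impI le)
        assume "a*b = P"
        then have "a = a0 \<and> b = b0" using eqpat[OF a_0 aA b_0 bB P00] P0 by simp
        then have "a0 = a1 \<and> b0 = b1" using ea eb q1 q2 by auto
        then show "(a0 = a1 \<and> b0 = b1) \<or> (a0 = 0 \<and> b0 = 0 \<and> a1 = 1 \<and> b1 = 1 \<and> q1*q2 = P)" by simp
      qed
    qed
  qed
  then show "((1-q1)*a0+q1*a1)*((1-q2)*b0+q2*b1) \<le> P"
    and "((1-q1)*a0+q1*a1)*((1-q2)*b0+q2*b1) = P \<Longrightarrow>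
          (a0 = a1 \<and> b0 = b1) \<or> (a0 = 0 \<and> b0 = 0 \<and> a1 = 1 \<and> b1 = 1 \<and> q1*q2 = P)"
    by (simp_all add: a_def b_def)
qed

definition w :: "nat set \<Rightarrow> (nat \<Rightarrow> real) \<Rightarrow> nat set \<Rightarrow> real" where
  "w G p x = (\<Prod>l\<in>x. p l) * (\<Prod>k\<in>G-x. 1 - p k)"

definition meas :: "nat set \<Rightarrow> (nat \<Rightarrow> real) \<Rightarrow> nat set set \<Rightarrow> real" where
  "meas G p A = (\<Sum>x\<in>A. w G p x)"

definition st :: "nat set \<Rightarrow> nat \<Rightarrow> nat set set" where
  "st G l = {x. x \<subseteq> G \<and> l \<in> x}"

definition A0 :: "nat \<Rightarrow> nat set set \<Rightarrow> nat set set" where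
  "A0 j A = {x\<in>A. j \<notin> x}"

definition A1 :: "nat \<Rightarrow> nat set set \<Rightarrow> nat set set" where
  "A1 j A = (\<lambda>x. x - {j}) ` {x\<in>A. j \<in> x}"

lemma w_A0:
  assumes "finite G" "j \<notin> G" "x \<subseteq> G"
  shows "w (insert j G) p x = (1 - p j) * w G p x"
proof -
  have "insert j G - x = insert j (G - x)" using assms by auto
  moreover have "j \<notin> G - x" using assms by auto
  ultimately have "(\<Prod>k\<in>insert j G - x. 1 - p k) = (1 - p j) * (\<Prod>k\<in>G-x. 1 - p k)"
    using assms by simp
  then show ?thesis by (simp add: w_def)
qed

lemma w_A1:
  assumes "finite G" "j \<notin> G" "x \<subseteq> insert j G" "j \<in> x"
  shows "w (insert j G) p x = p j * w G p (x - {j})"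
proof -
  have fx: "finite (x - {j})" using assms finite_subset by blast
  have "x = insert j (x - {j})" using assms by auto
  then have "(\<Prod>l\<in>x. p l) = p j * (\<Prod>l\<in>x-{j}. p l)"
    using fx by (metis Diff_iff insertI1 prod.insert)
  moreover have "insert j G - x = G - (x - {j})" using assms by auto
  ultimately show ?thesis by (simp add: w_def)
qed

lemma A1_inj: "inj_on (\<lambda>x. x - {j}) {x\<in>A. j \<in> x}"
  by (rule inj_onI) (metis CollectD insert_Diff)

lemma meas_split:
  assumes "finite G" "j \<notin> G" "A \<subseteq> Pow (insert j G)"
  shows "meas (insert j G) p A = (1 - p j) * meas G p (A0 j A) + p j * meas G p (A1 j A)"
proof -
  have fA: "finite A" using assms by (meson finite_Pow_iff finite_insert finite_subset)
  have dec: "A = {x\<in>A. j \<notin> x} \<union> {x\<in>A. j \<in> x}" by auto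
  have "meas (insert j G) p A = (\<Sum>x\<in>{x\<in>A. j \<notin> x}. w (insert j G) p x) + (\<Sum>x\<in>{x\<in>A. j \<in> x}. w (insert j G) p x)"
    unfolding meas_def using fA by (subst dec, subst sum.union_disjoint) auto
  also have "(\<Sum>x\<in>{x\<in>A. j \<notin> x}. w (insert j G) p x) = (\<Sum>x\<in>{x\<in>A. j \<notin> x}. (1 - p j) * w G p x)"
    using assms by (intro sum.cong) (auto intro!: w_A0)
  also have "(\<Sum>x\<in>{x\<in>A. j \<in> x}. w (insert j G) p x) = (\<Sum>x\<in>{x\<in>A. j \<in> x}. p j * w G p (x - {j}))"
    using assms by (intro sum.cong) (auto intro!: w_A1)
  also have "(\<Sum>x\<in>{x\<in>A. j \<in> x}. p j * w G p (x - {j})) = p j * meas G p (A1 j A)"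
    unfolding meas_def A1_def by (simp add: sum.reindex[OF A1_inj] sum_distrib_left)
  finally show ?thesis by (simp add: meas_def A0_def sum_distrib_left)
qed

lemma A0_Pow: "A \<subseteq> Pow (insert j G) \<Longrightarrow> j \<notin> G \<Longrightarrow> A0 j A \<subseteq> Pow G"
  unfolding A0_def by auto

lemma A1_Pow: "A \<subseteq> Pow (insert j G) \<Longrightarrow> j \<notin> G \<Longrightarrow> A1 j A \<subseteq> Pow G"
  unfolding A1_def by auto

lemma cross00: "cross_intersecting A B \<Longrightarrow> cross_intersecting (A0 j A) (A0 j B)"
  unfolding cross_intersecting_def A0_def by auto

lemma cross01: "cross_intersecting A B \<Longrightarrow> cross_intersecting (A0 j A) (A1 j B)"
  unfolding cross_intersecting_def A0_def A1_def by blast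

lemma cross10: "cross_intersecting A B \<Longrightarrow> cross_intersecting (A1 j A) (A0 j B)"
  unfolding cross_intersecting_def A0_def A1_def by blast

lemma w_pos:
  assumes "finite G" "x \<subseteq> G" "\<forall>l\<in>G. 0 < p l \<and> p l < 1"
  shows "w G p x > 0"
proof -
  have "(\<Prod>l\<in>x. p l) > 0" using assms by (intro prod_pos) auto
  moreover have "(\<Prod>k\<in>G-x. 1 - p k) > 0" using assms by (intro prod_pos) auto
  ultimately show ?thesis by (simp add: w_def)
qed

lemma meas_Pow:
  assumes "finite G"
  shows "meas G p (Pow G) = 1"
  using assms
proof (induction G rule: finite_induct)
  case empty
  then show ?case by (simp add: meas_def w_def)
next
  case (insert j G)
  have a0: "A0 j (Pow (insert j G)) = Pow G" using insert by (auto simp: A0_def)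
  have a1: "A1 j (Pow (insert j G)) = Pow G"
  proof
    show "A1 j (Pow (insert j G)) \<subseteq> Pow G" using insert by (auto simp: A1_def)
    show "Pow G \<subseteq> A1 j (Pow (insert j G))"
    proof
      fix y assume y: "y \<in> Pow G"
      then have "insert j y \<in> {x \<in> Pow (insert j G). j \<in> x}" by auto
      moreover have "y = insert j y - {j}" using y insert by auto
      ultimately show "y \<in> A1 j (Pow (insert j G))" unfolding A1_def by blast
    qed
  qed
  show ?case using meas_split[OF insert(1,2), of "Pow (insert j G)" p] a0 a1 insert(3)
    by (simp add: algebra_simps)
qed

lemma fin_of_Pow: "finite G \<Longrightarrow> A \<subseteq> Pow G \<Longrightarrow> finite A"
  by (meson finite_Pow_iff finite_subset)

lemma w_nonneg_in:
  assumes "finite G" "A \<subseteq> Pow G" "\<forall>l\<in>G. 0 < p l \<and> p l < 1" "x \<in> A"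
  shows "w G p x \<ge> 0"
  using assms by (meson PowD less_imp_le subsetD w_pos)

lemma meas_nonneg:
  assumes "finite G" "A \<subseteq> Pow G" "\<forall>l\<in>G. 0 < p l \<and> p l < 1"
  shows "meas G p A \<ge> 0"
  unfolding meas_def using w_nonneg_in[OF assms] by (intro sum_nonneg) auto

lemma meas_diff:
  assumes "finite G" "A \<subseteq> Pow G"
  shows "meas G p (Pow G) = meas G p A + meas G p (Pow G - A)"
  unfolding meas_def using sum.subset_diff[of A "Pow G" "w G p"] assms by (simp add: add.commute)

lemma meas_le1:
  assumes "finite G" "A \<subseteq> Pow G" "\<forall>l\<in>G. 0 < p l \<and> p l < 1"
  shows "meas G p A \<le> 1"
proof -
  have "meas G p (Pow G - A) \<ge> 0" using meas_nonneg[of G "Pow G - A" p] assms by auto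
  then show ?thesis using meas_diff[OF assms(1,2), of p] meas_Pow[OF assms(1), of p] by simp
qed

lemma meas_zero:
  assumes "finite G" "A \<subseteq> Pow G" "\<forall>l\<in>G. 0 < p l \<and> p l < 1" "meas G p A = 0"
  shows "A = {}"
proof (rule ccontr)
  assume "A \<noteq> {}"
  then obtain x where x: "x \<in> A" by auto
  have fA: "finite A" using fin_of_Pow assms by blast
  have "w G p x > 0" using w_pos assms x by (meson PowD subsetD)
  moreover have "w G p x \<le> meas G p A"
    unfolding meas_def using fA x w_nonneg_in[OF assms(1-3)]
    by (intro member_le_sum) auto
  ultimately show False using assms by simp
qed

lemma meas_one:
  assumes "finite G" "A \<subseteq> Pow G" "\<forall>l\<in>G. 0 < p l \<and> p l < 1" "meas G p A = 1"
  shows "A = Pow G"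
proof -
  have "meas G p (Pow G - A) = 0" using meas_diff[OF assms(1,2), of p] meas_Pow[OF assms(1), of p] assms by simp
  then have "Pow G - A = {}" using meas_zero[of G "Pow G - A" p] assms by auto
  then show ?thesis using assms by auto
qed

lemma A1_st:
  assumes "j \<notin> G" "l \<in> G"
  shows "A0 j (st (insert j G) l) = st G l" and "A1 j (st (insert j G) l) = st G l"
proof -
  show "A0 j (st (insert j G) l) = st G l" using assms by (auto simp: A0_def st_def)
  show "A1 j (st (insert j G) l) = st G l"
  proof
    show "A1 j (st (insert j G) l) \<subseteq> st G l" using assms by (auto simp: A1_def st_def)
    show "st G l \<subseteq> A1 j (st (insert j G) l)"
    proof
      fix y assume y: "y \<in> st G l"
      then have "insert j y \<in> {x \<in> st (insert j G) l. j \<in> x}" by (auto simp: st_def)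
      moreover have "y = insert j y - {j}" using y assms by (auto simp: st_def)
      ultimately show "y \<in> A1 j (st (insert j G) l)" unfolding A1_def by blast
    qed
  qed
qed

lemma recon:
  assumes "A \<subseteq> Pow (insert j G)" "x \<subseteq> insert j G"
  shows "x \<in> A \<longleftrightarrow> (j \<notin> x \<and> x \<in> A0 j A) \<or> (j \<in> x \<and> x - {j} \<in> A1 j A)"
proof
  assume "x \<in> A" then show "(j \<notin> x \<and> x \<in> A0 j A) \<or> (j \<in> x \<and> x - {j} \<in> A1 j A)"
    by (auto simp: A0_def A1_def)
next
  assume h: "(j \<notin> x \<and> x \<in> A0 j A) \<or> (j \<in> x \<and> x - {j} \<in> A1 j A)"
  show "x \<in> A"
  proof (cases "j \<in> x")
    case True
    with h obtain y where y: "y \<in> A" "j \<in> y" "x - {j} = y - {j}" by (auto simp: A1_def)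
    then have "x = y" using True by (metis insert_Diff)
    then show ?thesis using y by simp
  next
    case False then show ?thesis using h by (auto simp: A0_def)
  qed
qed

lemma recon_st:
  assumes "A \<subseteq> Pow (insert j G)" "j \<notin> G" "l \<in> G" "A0 j A = st G l" "A1 j A = st G l"
  shows "A = st (insert j G) l"
proof
  show "A \<subseteq> st (insert j G) l"
  proof
    fix x assume x: "x \<in> A"
    then have xs: "x \<subseteq> insert j G" using assms by auto
    from recon[OF assms(1) xs] x assms show "x \<in> st (insert j G) l"
      using xs by (auto simp: st_def)
  qed
  show "st (insert j G) l \<subseteq> A"
  proof
    fix x assume x: "x \<in> st (insert j G) l"
    then have xs: "x \<subseteq> insert j G" "l \<in> x" by (auto simp: st_def)
    have "l \<noteq> j" using assms by auto
    then have "(j \<notin> x \<and> x \<in> A0 j A) \<or> (j \<in> x \<and> x - {j} \<in> A1 j A)"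
      using xs assms by (auto simp: st_def)
    then show "x \<in> A" using recon[OF assms(1) xs(1)] by simp
  qed
qed

lemma recon_corner:
  assumes "A \<subseteq> Pow (insert j G)" "j \<notin> G" "A0 j A = {}" "A1 j A = Pow G"
  shows "A = st (insert j G) j"
proof
  show "A \<subseteq> st (insert j G) j"
  proof
    fix x assume x: "x \<in> A"
    then have xs: "x \<subseteq> insert j G" using assms by auto
    from recon[OF assms(1) xs] x assms show "x \<in> st (insert j G) j"
      using xs by (auto simp: st_def)
  qed
  show "st (insert j G) j \<subseteq> A"
  proof
    fix x assume x: "x \<in> st (insert j G) j"
    then have xs: "x \<subseteq> insert j G" "j \<in> x" by (auto simp: st_def)
    then have "x - {j} \<in> A1 j A" using assms by auto
    then show "x \<in> A" using recon[OF assms(1) xs(1)] xs by simp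
  qed
qed

lemma st_inj:
  assumes "l \<in> G" "st G l = st G l'" shows "l = l'"
proof -
  have "{l} \<in> st G l" using assms(1) by (simp add: st_def)
  then have "{l} \<in> st G l'" using assms(2) by simp
  then have "l' \<in> {l}" unfolding st_def by blast
  then show ?thesis by simp
qed

lemma meas_st:
  assumes "finite G" "l \<in> G" "\<forall>k\<in>G. 0 < p k \<and> p k < 1"
  shows "meas G p (st G l) = p l"
proof -
  define G' where "G' = G - {l}"
  have G: "G = insert l G'" "l \<notin> G'" "finite G'" using assms by (auto simp: G'_def)
  have s: "st G l \<subseteq> Pow (insert l G')" using G by (auto simp: st_def)
  have a0: "A0 l (st G l) = {}" by (auto simp: A0_def st_def)
  have a1: "A1 l (st G l) = Pow G'"
  proof
    show "A1 l (st G l) \<subseteq> Pow G'" using G by (auto simp: A1_def st_def)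
    show "Pow G' \<subseteq> A1 l (st G l)"
    proof
      fix y assume y: "y \<in> Pow G'"
      then have "insert l y \<in> {x \<in> st G l. l \<in> x}" using G by (auto simp: st_def)
      moreover have "y = insert l y - {l}" using y G by auto
      ultimately show "y \<in> A1 l (st G l)" unfolding A1_def by blast
    qed
  qed
  show ?thesis using meas_split[OF G(3) G(2) s, of p] a0 a1 meas_Pow[OF G(3), of p] G(1)
    by (simp add: meas_def)
qed

lemma main:
  fixes p1 p2 :: "nat \<Rightarrow> real" and P S :: real
  assumes fin: "finite G"
    and pl: "\<forall>l\<in>G. 0 < p1 l \<and> p1 l \<le> 1/3 \<and> 0 < p2 l \<and> p2 l \<le> 1/3 \<and> p1 l * p2 l \<le> P \<and> p1 l * p2 l \<le> S*(1-p1 l)*(1-p2 l)"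
    and S: "0 < S" "S < 1" "S \<le> 9*P/4" and P0: "P > 0"
  shows "A \<subseteq> Pow G \<Longrightarrow> B \<subseteq> Pow G \<Longrightarrow> cross_intersecting A B \<Longrightarrow>
    meas G p1 A * meas G p2 B \<le> P \<and> meas G p1 A * meas G p2 B \<le> S*(1-meas G p1 A)*(1-meas G p2 B) \<and>
    (meas G p1 A * meas G p2 B = P \<longrightarrow> (\<exists>l\<in>G. p1 l * p2 l = P \<and> A = st G l \<and> B = st G l))"
  using fin pl
proof (induction G arbitrary: A B rule: finite_induct)
  case empty
  have "A = {} \<or> B = {}"
  proof (rule ccontr)
    assume "\<not> (A = {} \<or> B = {})"
    then obtain x y where "x \<in> A" "y \<in> B" by auto
    then have "x = {}" "y = {}" using empty by auto
    then show False using empty \<open>x \<in> A\<close> \<open>y \<in> B\<close> by (auto simp: cross_intersecting_def)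
  qed
  then have z: "meas {} p1 A * meas {} p2 B = 0" by (auto simp: meas_def)
  have a1: "meas {} p1 A \<le> 1" using meas_le1[of "{}" A p1] empty by simp
  have b1: "meas {} p2 B \<le> 1" using meas_le1[of "{}" B p2] empty by simp
  have "0 \<le> S*(1-meas {} p1 A)*(1-meas {} p2 B)" using a1 b1 S by simp
  then show ?case using z P0 by (simp only: z) simp
next
  case (insert j G)
  note pl' = insert.prems(4)
  have plG: "\<forall>l\<in>G. 0 < p1 l \<and> p1 l \<le> 1/3 \<and> 0 < p2 l \<and> p2 l \<le> 1/3 \<and> p1 l * p2 l \<le> P \<and> p1 l * p2 l \<le> S*(1-p1 l)*(1-p2 l)"
    using pl' by simp
  have pj: "0 < p1 j" "p1 j \<le> 1/3" "0 < p2 j" "p2 j \<le> 1/3" "p1 j * p2 j \<le> P" "p1 j * p2 j \<le> S*(1-p1 j)*(1-p2 j)"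
    using pl' by auto
  have r1: "\<forall>l\<in>G. 0 < p1 l \<and> p1 l < 1" and r2: "\<forall>l\<in>G. 0 < p2 l \<and> p2 l < 1" using plG by auto
  have AP: "A \<subseteq> Pow (insert j G)" and BP: "B \<subseteq> Pow (insert j G)" and cr: "cross_intersecting A B"
    using insert.prems by auto
  define a0 where "a0 = meas G p1 (A0 j A)"
  define a1 where "a1 = meas G p1 (A1 j A)"
  define b0 where "b0 = meas G p2 (A0 j B)"
  define b1 where "b1 = meas G p2 (A1 j B)"
  have sA: "A0 j A \<subseteq> Pow G" "A1 j A \<subseteq> Pow G" using A0_Pow[OF AP insert.hyps(2)] A1_Pow[OF AP insert.hyps(2)] by auto
  have sB: "A0 j B \<subseteq> Pow G" "A1 j B \<subseteq> Pow G" using A0_Pow[OF BP insert.hyps(2)] A1_Pow[OF BP insert.hyps(2)] by auto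
  note I00 = insert.IH[OF sA(1) sB(1) cross00[OF cr] plG]
  note I01 = insert.IH[OF sA(1) sB(2) cross01[OF cr] plG]
  note I10 = insert.IH[OF sA(2) sB(1) cross10[OF cr] plG]
  have ma: "meas (insert j G) p1 A = (1 - p1 j)*a0 + p1 j * a1"
    using meas_split[OF insert.hyps AP] by (simp add: a0_def a1_def)
  have mb: "meas (insert j G) p2 B = (1 - p2 j)*b0 + p2 j * b1"
    using meas_split[OF insert.hyps BP] by (simp add: b0_def b1_def)
  have ra: "0 \<le> a0" "a0 \<le> 1" "0 \<le> a1" "a1 \<le> 1"
    unfolding a0_def a1_def using sA r1 insert.hyps(1) by (auto intro: meas_nonneg meas_le1)
  have rb: "0 \<le> b0" "b0 \<le> 1" "0 \<le> b1" "b1 \<le> 1"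
    unfolding b0_def b1_def using sB r2 insert.hyps(1) by (auto intro: meas_nonneg meas_le1)
  have st: "((1-p1 j)*a0+p1 j*a1)*((1-p2 j)*b0+p2 j*b1) \<le> S*(1-((1-p1 j)*a0+p1 j*a1))*(1-((1-p2 j)*b0+p2 j*b1))"
    "((1-p1 j)*a0+p1 j*a1)*((1-p2 j)*b0+p2 j*b1) \<le> P"
    "((1-p1 j)*a0+p1 j*a1)*((1-p2 j)*b0+p2 j*b1) = P \<Longrightarrow>
          (a0 = a1 \<and> b0 = b1) \<or> (a0 = 0 \<and> b0 = 0 \<and> a1 = 1 \<and> b1 = 1 \<and> p1 j*p2 j = P)"
    using step[OF pj(1,2) pj(3,4) pj(5) S(1,2,3) pj(6) ra rb] I00 I01 I10
    by (auto simp: a0_def a1_def b0_def b1_def)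
  show ?case
  proof (intro conjI impI)
    show "meas (insert j G) p1 A * meas (insert j G) p2 B \<le> P" using st(2) ma mb by simp
    show "meas (insert j G) p1 A * meas (insert j G) p2 B \<le> S * (1 - meas (insert j G) p1 A) * (1 - meas (insert j G) p2 B)"
      using st(1) ma mb by simp
    assume eq: "meas (insert j G) p1 A * meas (insert j G) p2 B = P"
    then have "(a0 = a1 \<and> b0 = b1) \<or> (a0 = 0 \<and> b0 = 0 \<and> a1 = 1 \<and> b1 = 1 \<and> p1 j*p2 j = P)"
      using st(3) ma mb by simp
    then show "\<exists>l\<in>insert j G. p1 l * p2 l = P \<and> A = st (insert j G) l \<and> B = st (insert j G) l"
    proof
      assume e: "a0 = a1 \<and> b0 = b1"
      have "((1-p1 j)*a0+p1 j*a1) = a0" "((1-p2 j)*b0+p2 j*b1) = b0" using e by (simp_all add: algebra_simps)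
      then have p00: "a0*b0 = P" and p01: "a0*b1 = P" and p10: "a1*b0 = P" using eq ma mb e by simp_all
      from I00 p00 obtain l where l: "l \<in> G" "p1 l * p2 l = P" "A0 j A = st G l" "A0 j B = st G l"
        by (auto simp: a0_def b0_def)
      from I10 p10 obtain l' where l': "l' \<in> G" "A1 j A = st G l'" "A0 j B = st G l'"
        by (auto simp: a1_def b0_def)
      from I01 p01 obtain l'' where l'': "l'' \<in> G" "A0 j A = st G l''" "A1 j B = st G l''"
        by (auto simp: a0_def b1_def)
      have "l = l'" using st_inj[OF l(1)] l(4) l'(3) by simp
      moreover have "l = l''" using st_inj[OF l(1)] l(3) l''(2) by simp
      ultimately have "A = st (insert j G) l" "B = st (insert j G) l"
        using recon_st[OF AP insert.hyps(2) l(1)] recon_st[OF BP insert.hyps(2) l(1)] l l' l'' by simp_all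
      then show ?thesis using l by auto
    next
      assume e: "a0 = 0 \<and> b0 = 0 \<and> a1 = 1 \<and> b1 = 1 \<and> p1 j*p2 j = P"
      have "A0 j A = {}" using meas_zero[OF insert.hyps(1) sA(1) r1] e by (simp add: a0_def)
      moreover have "A1 j A = Pow G" using meas_one[OF insert.hyps(1) sA(2) r1] e by (simp add: a1_def)
      moreover have "A0 j B = {}" using meas_zero[OF insert.hyps(1) sB(1) r2] e by (simp add: b0_def)
      moreover have "A1 j B = Pow G" using meas_one[OF insert.hyps(1) sB(2) r2] e by (simp add: b1_def)
      ultimately have "A = st (insert j G) j" "B = st (insert j G) j"
        using recon_corner[OF AP insert.hyps(2)] recon_corner[OF BP insert.hyps(2)] by simp_all
      then show ?thesis using e by auto
    qed
  qed
qed

theorem theorem3: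
  fixes n :: nat and p1 p2 :: "nat \<Rightarrow> real" and U1 U2 :: "nat set set"
  assumes "n \<ge> 1"
    and "prob_vec n p1" and "prob_vec n p2"
    and "p1 1 * p2 1 = Max ((\<lambda>l. p1 l * p2 l) ` {1..n})"
    and "\<forall>l\<in>{1..n}. p1 l \<le> 1/3 \<and> p2 l \<le> 1/3"
    and "U1 \<subseteq> Pow {1..n}" and "U2 \<subseteq> Pow {1..n}"
    and "cross_intersecting U1 U2"
  shows "prod_measure n p1 U1 * prod_measure n p2 U2 \<le> p1 1 * p2 1
     \<and> (prod_measure n p1 U1 * prod_measure n p2 U2 = p1 1 * p2 1 \<longleftrightarrow>
        (\<exists>l\<in>{l\<in>{1..n}. p1 l * p2 l = p1 1 * p2 1}. U1 = star n l \<and> U2 = star n l))"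
proof -
  define P where "P = p1 1 * p2 1"
  define S where "S = 9*P/4"
  have pm: "\<And>p U. prod_measure n p U = meas {1..n} p U"
    by (simp add: prod_measure_def meas_def w_def)
  have sm: "\<And>l. star n l = st {1..n} l" by (simp add: star_def st_def)
  have one: "1 \<in> {1..n}" using assms(1) by simp
  have pv1: "\<forall>l\<in>{1..n}. 0 < p1 l \<and> p1 l < 1" and pv2: "\<forall>l\<in>{1..n}. 0 < p2 l \<and> p2 l < 1"
    using assms(2,3) by (auto simp: prob_vec_def)
  have rP: "\<forall>l\<in>{1..n}. p1 l * p2 l \<le> P"
    using assms(4) by (auto simp: P_def intro!: Max_ge)
  have "0 < p1 1 \<and> p1 1 < 1" "0 < p2 1 \<and> p2 1 < 1" using pv1 pv2 one by blast+
  then have P0: "P > 0" by (simp add: P_def)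
  have P19: "P \<le> 1/9"
  proof -
    have h1: "p1 1 \<le> 1/3 \<and> p2 1 \<le> 1/3" using assms(5) one by blast
    have h2: "0 < p2 1 \<and> p2 1 < 1" using pv2 one by blast
    have h: "p1 1 \<le> 1/3" "p2 1 \<le> 1/3" "0 \<le> p2 1" using h1 h2 by auto
    have "p1 1 * p2 1 \<le> (1/3)*(1/3)" using h by (intro mult_mono) auto
    then show ?thesis by (simp add: P_def)
  qed
  have pl: "\<forall>l\<in>{1..n}. 0 < p1 l \<and> p1 l \<le> 1/3 \<and> 0 < p2 l \<and> p2 l \<le> 1/3 \<and> p1 l * p2 l \<le> P \<and> p1 l * p2 l \<le> S*(1-p1 l)*(1-p2 l)"
  proof
    fix l assume l: "l \<in> {1..n}"
    have b: "0 < p1 l" "p1 l \<le> 1/3" "0 < p2 l" "p2 l \<le> 1/3" using l pv1 pv2 assms(5) by auto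
    have "(2/3)*(2/3) \<le> (1-p1 l)*(1-p2 l)" using b by (intro mult_mono) auto
    then have "S*((2/3)*(2/3)) \<le> S*((1-p1 l)*(1-p2 l))" using P0 by (intro mult_left_mono) (auto simp: S_def)
    then have "P \<le> S*(1-p1 l)*(1-p2 l)" by (simp add: S_def mult.assoc)
    moreover have "p1 l * p2 l \<le> P" using rP l by blast
    ultimately show "0 < p1 l \<and> p1 l \<le> 1/3 \<and> 0 < p2 l \<and> p2 l \<le> 1/3 \<and> p1 l * p2 l \<le> P \<and> p1 l * p2 l \<le> S*(1-p1 l)*(1-p2 l)"
      using b by linarith
  qed
  have S: "0 < S" "S < 1" "S \<le> 9*P/4" using P0 P19 by (auto simp: S_def)
  note M = main[OF finite_atLeastAtMost pl S P0 assms(6,7,8)]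
  show ?thesis
  proof (intro conjI iffI)
    show "prod_measure n p1 U1 * prod_measure n p2 U2 \<le> p1 1 * p2 1" using M by (simp add: pm P_def)
  next
    assume "prod_measure n p1 U1 * prod_measure n p2 U2 = p1 1 * p2 1"
    then obtain l where "l \<in> {1..n}" "p1 l * p2 l = P" "U1 = st {1..n} l" "U2 = st {1..n} l"
      using M by (auto simp: pm P_def)
    then show "\<exists>l\<in>{l\<in>{1..n}. p1 l * p2 l = p1 1 * p2 1}. U1 = star n l \<and> U2 = star n l"
      by (auto simp: sm P_def)
  next
    assume "\<exists>l\<in>{l\<in>{1..n}. p1 l * p2 l = p1 1 * p2 1}. U1 = star n l \<and> U2 = star n l"
    then obtain l where l: "l \<in> {1..n}" "p1 l * p2 l = p1 1 * p2 1" "U1 = st {1..n} l" "U2 = st {1..n} l"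
      by (auto simp: sm)
    then show "prod_measure n p1 U1 * prod_measure n p2 U2 = p1 1 * p2 1"
      using meas_st[OF finite_atLeastAtMost l(1) pv1] meas_st[OF finite_atLeastAtMost l(1) pv2]
      by (simp add: pm)
  qed
qed


end
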